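(* Let $k\ge 1$, $l=1$, $n=k+1$, $p\in[0,1]$, $q=1-p$. Consider the binning code (the Ni code for $l=1$) whose $2^k$ bins are the pairs $\{x^n,\bar{x}^n\}$, $x^n\in\{0,1\}^n$, where $\bar{x}^n$ is the complement of $x^n$ (all bits flipped). Then its equivocation $H(M\mid Z^n)$ equals $V^*(1,k,p)$, the optimal value of the linear program $$\text{maximize } \sum_{\mathbf{r}\in\mathcal{V}} f(\mathbf{r})\,x_{\mathbf{r}}\quad\text{subject to}\quad \sum_{\mathbf{r}\in\mathcal{V}} r_j\,x_{\mathbf{r}}=\binom{n}{j}\ (j=0,\dots,n),\qquad x_{\mathbf{r}}\ge 0,$$ where $\mathcal{V}=\{\mathbf{r}\in\mathbb{Z}_{\ge0}^{n+1}:\sum_j r_j=2\}$, $\pi(\mathbf{r})=\sum_{j=0}^n r_jp^jq^{n-j}$ and $f(\mathbf{r})=-\pi(\mathbf{r})\log_2\pi(\mathbf{r})$. In particular this code attains the upper bound $V^*(1,k,p)$ on the equivocation of all binning codes with $2^k$ bins of size $2$.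
   Context: Wiretap model: a message $M$ is uniform on $\{1,\dots,2^k\}$; the encoder maps message $i$ to a codeword $X^n$ chosen uniformly at random from bin $\mathcal{B}_i$, the bins forming a partition of $\{0,1\}^n$ into sets of equal size. The eavesdropper observes $Z^n$, the output of a binary symmetric channel with crossover probability $p$ applied to $X^n$. For an observation $z^n$, $P(x^n\mid z^n)=p^{d_H(x^n,z^n)}q^{n-d_H(x^n,z^n)}$ ($d_H$ = Hamming distance), $P_{\mathcal{B}_i}(z^n)=\sum_{x^n\in\mathcal{B}_i}P(x^n\mid z^n)$, $H(M\mid Z^n=z^n)=-\sum_i P_{\mathcal{B}_i}(z^n)\log_2P_{\mathcal{B}_i}(z^n)$, and $H(M\mid Z^n)=2^{-n}\sum_{z^n}H(M\mid Z^n=z^n)$. Convention $0\log_2 0=0$. *)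

theory Defs
  imports Complex_Main
begin

definition words :: "nat \<Rightarrow> bool list set" where
  "words n = {xs. length xs = n}"

definition hamming :: "bool list \<Rightarrow> bool list \<Rightarrow> nat" where
  "hamming xs ys = card {i. i < length xs \<and> xs ! i \<noteq> ys ! i}"

text \<open>P(x^n | z^n) for the BSC with crossover probability p, q = 1 - p.\<close>
definition bsc_post :: "real \<Rightarrow> nat \<Rightarrow> bool list \<Rightarrow> bool list \<Rightarrow> real" where
  "bsc_post p n x z = p ^ hamming x z * (1 - p) ^ (n - hamming x z)"

definition bin_prob :: "real \<Rightarrow> nat \<Rightarrow> bool list set \<Rightarrow> bool list \<Rightarrow> real" where
  "bin_prob p n B z = (\<Sum>x\<in>B. bsc_post p n x z)"

definition negentr :: "real \<Rightarrow> real" where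
  "negentr t = (if t = 0 then 0 else - t * log 2 t)"

definition equivocation :: "real \<Rightarrow> nat \<Rightarrow> bool list set set \<Rightarrow> real" where
  "equivocation p n bins =
     (1 / 2 ^ n) * (\<Sum>z\<in>words n. \<Sum>B\<in>bins. negentr (bin_prob p n B z))"

definition ni_bins :: "nat \<Rightarrow> bool list set set" where
  "ni_bins n = {{x, map Not x} | x. x \<in> words n}"

text \<open>The LP defining V^*(1,k,p), with n = k+1; vectors r \<in> Z_{\<ge>0}^{n+1}
  are lists of length n+1 indexed 0..n.\<close>
definition lp_V :: "nat \<Rightarrow> nat list set" where
  "lp_V n = {r. length r = n + 1 \<and> sum_list r = 2}"

definition lp_pi :: "real \<Rightarrow> nat \<Rightarrow> nat list \<Rightarrow> real" where
  "lp_pi p n r = (\<Sum>j\<le>n. real (r ! j) * p ^ j * (1 - p) ^ (n - j))"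

definition lp_f :: "real \<Rightarrow> nat \<Rightarrow> nat list \<Rightarrow> real" where
  "lp_f p n r = negentr (lp_pi p n r)"

definition lp_feasible :: "nat \<Rightarrow> (nat list \<Rightarrow> real) \<Rightarrow> bool" where
  "lp_feasible n x \<longleftrightarrow>
     (\<forall>r\<in>lp_V n. x r \<ge> 0) \<and>
     (\<forall>j\<le>n. (\<Sum>r\<in>lp_V n. real (r ! j) * x r) = real (n choose j))"

definition lp_obj :: "real \<Rightarrow> nat \<Rightarrow> (nat list \<Rightarrow> real) \<Rightarrow> real" where
  "lp_obj p n x = (\<Sum>r\<in>lp_V n. lp_f p n r * x r)"

text \<open>Optimal value V^*(1,k,p) (the LP is feasible and bounded).\<close>
definition V_star :: "nat \<Rightarrow> real \<Rightarrow> real" where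
  "V_star k p = Sup (lp_obj p (k + 1) ` {x. lp_feasible (k + 1) x})"

end

theory Submission
  imports Defs
begin


definition psi :: "real \<Rightarrow> real \<Rightarrow> real" where
  "psi c u = - u * ln (u + c\<^sup>2 / u) + c * (pi / 2 - 2 * arctan (u / c))"

lemma psi_deriv:
  assumes "c > 0" "u > 0"
  shows "(psi c has_real_derivative (- ln (u + c\<^sup>2 / u) - 1)) (at u)"
proof -
  have d: "c\<^sup>2 + u\<^sup>2 > 0" using assms by (simp add: add_pos_pos)
  have i1: "inverse (1 + (u/c)\<^sup>2) = c\<^sup>2/(c\<^sup>2+u\<^sup>2)" using assms d by (simp add: field_simps power2_eq_square)
  have a1: "(1 - c\<^sup>2/(u*u)) * u = (u\<^sup>2 - c\<^sup>2)/u" using assms by (simp add: field_simps power2_eq_square)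
  have a2: "u + c\<^sup>2/u = (c\<^sup>2 + u\<^sup>2)/u" using assms by (simp add: field_simps power2_eq_square)
  have i2: "(1 - c\<^sup>2/(u*u)) * u / (u + c\<^sup>2/u) = (u\<^sup>2-c\<^sup>2)/(c\<^sup>2+u\<^sup>2)" unfolding a1 a2 using assms by simp
  have i3: "- (c\<^sup>2/(c\<^sup>2+u\<^sup>2)*2) - (u\<^sup>2-c\<^sup>2)/(c\<^sup>2+u\<^sup>2) = -1" using d assms by (simp add: divide_simps)
  show ?thesis
  unfolding psi_def[abs_def]
  using assms i1 i2 i3
  by (auto intro!: derivative_eq_intros simp: add_pos_nonneg)
qed

lemma psi_pair:
  assumes "c > 0" "u > 0"
  shows "psi c u + psi c (c\<^sup>2 / u) = - (u + c\<^sup>2 / u) * ln (u + c\<^sup>2 / u)"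
proof -
  have e2: "arctan (c\<^sup>2 / u / c) = pi / 2 - arctan (u / c)"
  proof -
    have "c\<^sup>2 / u / c = 1 / (u / c)" using assms by (simp add: power2_eq_square field_simps)
    moreover have "arctan (1 / (u / c)) = pi / 2 - arctan (u / c)"
      using arctan_inverse[of "u / c"] assms by simp
    ultimately show ?thesis by simp
  qed
  have e1: "c\<^sup>2 / (c\<^sup>2 / u) = u" using assms by (simp add: power2_eq_square field_simps)
  have "psi c (c\<^sup>2 / u) = - (c\<^sup>2 / u) * ln (c\<^sup>2 / u + u) + c * (pi / 2 - 2 * (pi / 2 - arctan (u / c)))"
    unfolding psi_def by (simp only: e1 e2)
  thus ?thesis unfolding psi_def by (simp add: algebra_simps)
qed

lemma psi_ineq:
  assumes "c > 0" "u > 0" "v > 0"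
  shows "- (u + v) * ln (u + v) \<le> psi c u + psi c v"
proof -
  define h where "h x = psi c x + (x + v) * ln (x + v)" for x
  define u0 where "u0 = c\<^sup>2 / v"
  have u0pos: "u0 > 0" using assms by (simp add: u0_def)
  have hd: "(h has_real_derivative (ln (x + v) - ln (x + c\<^sup>2 / x))) (at x)" if "x > 0" for x
  proof -
    have "(h has_real_derivative ((- ln (x + c\<^sup>2 / x) - 1) + (1 * ln (x + v) + (x + v) * (1 / (x + v))))) (at x)"
      unfolding h_def[abs_def] using that assms
      by (auto intro!: derivative_eq_intros psi_deriv)
    moreover have "(- ln (x + c\<^sup>2 / x) - 1) + (1 * ln (x + v) + (x + v) * (1 / (x + v))) = ln (x + v) - ln (x + c\<^sup>2 / x)"
      using that assms by simp
    ultimately show ?thesis by simp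
  qed
  have key: "h u0 \<le> h u"
  proof (cases "u \<le> u0")
    case True
    show ?thesis
    proof (rule DERIV_nonpos_imp_nonincreasing[OF True])
      fix x assume x: "u \<le> x" "x \<le> u0"
      have xp: "x > 0" using x assms by simp
      have "v \<le> c\<^sup>2 / x"
      proof -
        have "v * x \<le> v * u0" using x assms by simp
        also have "\<dots> = c\<^sup>2" using assms by (simp add: u0_def)
        finally show ?thesis using xp by (simp add: field_simps)
      qed
      hence "ln (x + v) - ln (x + c\<^sup>2 / x) \<le> 0" using xp assms by simp
      thus "\<exists>y. (h has_real_derivative y) (at x) \<and> y \<le> 0" using hd[OF xp] by blast
    qed
  next
    case False
    show ?thesis
    proof (rule DERIV_nonneg_imp_nondecreasing[of u0 u h])
      show "u0 \<le> u" using False by simp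
      fix x assume x: "u0 \<le> x" "x \<le> u"
      have xp: "x > 0" using x u0pos by simp
      have "c\<^sup>2 / x \<le> v"
      proof -
        have "c\<^sup>2 = v * u0" using assms by (simp add: u0_def)
        also have "\<dots> \<le> v * x" using x assms by simp
        finally show ?thesis using xp by (simp add: field_simps)
      qed
      hence "ln (x + v) - ln (x + c\<^sup>2 / x) \<ge> 0" using xp assms by (simp add: add_pos_nonneg)
      thus "\<exists>y. (h has_real_derivative y) (at x) \<and> y \<ge> 0" using hd[OF xp] by blast
    qed
  qed
  have "c\<^sup>2 / u0 = v" using assms by (simp add: u0_def)
  hence "h u0 + psi c v = 0" using psi_pair[OF assms(1) u0pos] unfolding h_def
    by (simp add: algebra_simps)
  with key show ?thesis unfolding h_def by (simp add: algebra_simps)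
qed



lemma sum_nat_decomp:
  fixes R :: "nat \<Rightarrow> nat" and S :: "nat set"
  assumes "finite S"
  shows "sum R S = m \<Longrightarrow> \<exists>xs. set xs \<subseteq> S \<and> length xs = m \<and>
     (\<forall>g::nat\<Rightarrow>real. (\<Sum>j\<in>S. real (R j) * g j) = sum_list (map g xs))"
proof (induction m arbitrary: R)
  case 0
  hence "\<forall>j\<in>S. R j = 0" using assms by simp
  thus ?case by (intro exI[of _ "[]"]) simp
next
  case (Suc m)
  have "\<exists>a\<in>S. R a > 0"
  proof (rule ccontr)
    assume "\<not> ?thesis"
    hence "\<forall>j\<in>S. R j = 0" by auto
    hence "sum R S = 0" by simp
    with Suc.prems show False by simp
  qed
  then obtain a where a: "a \<in> S" "R a > 0" by blast
  define R' where "R' = R(a := R a - 1)"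
  have s1: "sum R S = R a + sum R (S - {a})" using a assms by (simp add: sum.remove)
  have s2: "sum R' S = R' a + sum R' (S - {a})" using a assms by (simp add: sum.remove)
  have s3: "sum R' (S - {a}) = sum R (S - {a})" unfolding R'_def by (rule sum.cong) auto
  have "sum R' S = m" using s1 s2 s3 Suc.prems a by (simp add: R'_def)
  from Suc.IH[OF this] obtain xs where xs: "set xs \<subseteq> S" "length xs = m"
    "\<forall>g::nat\<Rightarrow>real. (\<Sum>j\<in>S. real (R' j) * g j) = sum_list (map g xs)" by blast
  show ?case
  proof (intro exI[of _ "a # xs"] conjI allI)
    show "set (a # xs) \<subseteq> S" using xs a by simp
    show "length (a # xs) = Suc m" using xs by simp
    fix g :: "nat \<Rightarrow> real"
    have t1: "(\<Sum>j\<in>S. real (R j) * g j) = real (R a) * g a + (\<Sum>j\<in>S - {a}. real (R j) * g j)"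
      using a assms by (simp add: sum.remove)
    have t2: "(\<Sum>j\<in>S. real (R' j) * g j) = real (R' a) * g a + (\<Sum>j\<in>S - {a}. real (R' j) * g j)"
      using a assms by (simp add: sum.remove)
    have t3: "(\<Sum>j\<in>S - {a}. real (R' j) * g j) = (\<Sum>j\<in>S - {a}. real (R j) * g j)"
      unfolding R'_def by (rule sum.cong) auto
    have t4: "real (R' a) = real (R a) - 1" using a by (simp add: R'_def of_nat_diff)
    show "(\<Sum>j\<in>S. real (R j) * g j) = sum_list (map g (a # xs))"
      using t1 t2 t3 t4 xs(3) by (simp add: algebra_simps)
  qed
qed

lemma lpV_decomp:
  assumes "r \<in> lp_V n"
  shows "\<exists>a\<le>n. \<exists>b\<le>n. \<forall>g::nat\<Rightarrow>real. (\<Sum>j\<le>n. real (r ! j) * g j) = g a + g b"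
proof -
  have len: "length r = n + 1" and s: "sum_list r = 2" using assms by (auto simp: lp_V_def)
  have "sum (\<lambda>j. r ! j) {..n} = 2"
    using s len by (simp add: sum_list_sum_nth atLeast0LessThan lessThan_Suc_atMost)
  from sum_nat_decomp[OF finite_atMost this] obtain xs where
    xs: "set xs \<subseteq> {..n}" "length xs = 2"
    "\<forall>g::nat\<Rightarrow>real. (\<Sum>j\<le>n. real (r ! j) * g j) = sum_list (map g xs)" by blast
  then obtain a b where "xs = [a, b]"
    by (metis (no_types, lifting) One_nat_def Suc_length_conv length_0_conv numeral_2_eq_2)
  with xs show ?thesis by auto
qed

lemma lpV_finite: "finite (lp_V n)"
proof -
  have "lp_V n \<subseteq> {xs. set xs \<subseteq> {0..2} \<and> length xs = n + 1}"
    using member_le_sum_list by (fastforce simp: lp_V_def)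
  moreover have "finite {xs. set xs \<subseteq> {0..2::nat} \<and> length xs = n + 1}"
    by (rule finite_lists_length_eq) simp
  ultimately show ?thesis by (rule finite_subset)
qed

definition pj :: "real \<Rightarrow> nat \<Rightarrow> nat \<Rightarrow> real" where
  "pj p n j = p ^ j * (1 - p) ^ (n - j)"

lemma lp_pi_pj: "lp_pi p n r = (\<Sum>j\<le>n. real (r ! j) * pj p n j)"
  unfolding lp_pi_def pj_def by (simp add: mult.assoc)

definition Nval :: "real \<Rightarrow> nat \<Rightarrow> real" where
  "Nval p n = (\<Sum>j\<le>n. real (n choose j) * negentr (pj p n j + pj p n (n - j))) / 2"

lemma negentr_nonpos: "t = 0 \<or> t \<ge> 1 \<Longrightarrow> negentr t \<le> 0"
  unfolding negentr_def by auto

lemma negentr_pos: "t > 0 \<Longrightarrow> negentr t = - t * ln t / ln 2"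
  unfolding negentr_def log_def by simp

lemma sum_rev_atMost: "(\<Sum>j\<le>n. f (n - j)) = (\<Sum>j\<le>(n::nat). (f j :: real))"
  using sum.atLeastAtMost_rev[of f 0 n] by (simp add: atLeast0AtMost)

lemma dual_exists:
  assumes n: "n \<ge> 1" and p: "0 \<le> p" "p \<le> 1"
  shows "\<exists>y. (\<forall>r\<in>lp_V n. lp_f p n r \<le> (\<Sum>j\<le>n. real (r ! j) * y j)) \<and>
             (\<Sum>j\<le>n. real (n choose j) * y j) = Nval p n"
proof (cases "p = 0 \<or> p = 1")
  case True
  have pj01: "pj p n j = 0 \<or> pj p n j = 1" for j
    using True unfolding pj_def by (auto simp: power_0_left split: if_splits)
  have pjs: "pj p n j + pj p n (n - j) = 0 \<or> pj p n j + pj p n (n - j) = 1" if "j \<le> n" for j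
    using True that n unfolding pj_def by (auto simp: power_0_left split: if_splits)
  show ?thesis
  proof (intro exI[of _ "\<lambda>_. 0"] conjI ballI)
    fix r assume r: "r \<in> lp_V n"
    from lpV_decomp[OF r] obtain a b where ab: "a \<le> n" "b \<le> n"
      "\<forall>g::nat\<Rightarrow>real. (\<Sum>j\<le>n. real (r ! j) * g j) = g a + g b" by blast
    have "lp_pi p n r = pj p n a + pj p n b" using ab(3) by (simp add: lp_pi_pj)
    hence "lp_pi p n r = 0 \<or> lp_pi p n r \<ge> 1" using pj01[of a] pj01[of b] by auto
    thus "lp_f p n r \<le> (\<Sum>j\<le>n. real (r ! j) * 0)"
      unfolding lp_f_def using negentr_nonpos by simp
  next
    have "negentr (pj p n j + pj p n (n - j)) = 0" if "j \<le> n" for j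
      using pjs[OF that] unfolding negentr_def by auto
    hence "Nval p n = 0" unfolding Nval_def by simp
    thus "(\<Sum>j\<le>n. real (n choose j) * 0) = Nval p n" by simp
  qed
next
  case False
  with p have p': "0 < p" "p < 1" by auto
  define c where "c = sqrt ((p * (1 - p)) ^ n)"
  have cpos: "c > 0" unfolding c_def using p' by simp
  have pjpos: "pj p n j > 0" for j unfolding pj_def using p' by simp
  have c2: "c\<^sup>2 = p ^ n * (1 - p) ^ n" unfolding c_def using p' by (simp add: power_mult_distrib)
  have pjrev: "pj p n (n - j) = c\<^sup>2 / pj p n j" if "j \<le> n" for j
  proof -
    have e: "p ^ j * p ^ (n - j) = p ^ n" "(1 - p) ^ j * (1 - p) ^ (n - j) = (1 - p) ^ n"
      using that by (simp_all add: power_add[symmetric])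
    have "pj p n j * pj p n (n - j) = (p ^ j * p ^ (n - j)) * ((1 - p) ^ j * (1 - p) ^ (n - j))"
      using that unfolding pj_def by (simp add: mult_ac)
    also have "\<dots> = c\<^sup>2" using e c2 by simp
    finally show ?thesis using pjpos[of j] by (simp add: field_simps)
  qed
  have ln2: "ln (2::real) > 0" by simp
  define y where "y j = psi c (pj p n j) / ln 2" for j
  show ?thesis
  proof (intro exI[of _ y] conjI ballI)
    fix r assume r: "r \<in> lp_V n"
    from lpV_decomp[OF r] obtain a b where ab: "a \<le> n" "b \<le> n"
      "\<forall>g::nat\<Rightarrow>real. (\<Sum>j\<le>n. real (r ! j) * g j) = g a + g b" by blast
    have "lp_pi p n r = pj p n a + pj p n b" using ab(3) by (simp add: lp_pi_pj)
    hence "lp_f p n r = - (pj p n a + pj p n b) * ln (pj p n a + pj p n b) / ln 2"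
      unfolding lp_f_def using pjpos[of a] pjpos[of b] by (simp add: negentr_pos)
    also have "\<dots> \<le> (psi c (pj p n a) + psi c (pj p n b)) / ln 2"
      using psi_ineq[OF cpos pjpos pjpos] ln2 by (simp add: divide_right_mono)
    also have "\<dots> = y a + y b" by (simp add: y_def add_divide_distrib)
    also have "\<dots> = (\<Sum>j\<le>n. real (r ! j) * y j)"
      using ab(3)[rule_format, of y] by simp
    finally show "lp_f p n r \<le> (\<Sum>j\<le>n. real (r ! j) * y j)" .
  next
    have "(\<Sum>j\<le>n. real (n choose j) * y j) = (\<Sum>j\<le>n. real (n choose (n - j)) * y (n - j))"
      by (rule sum_rev_atMost[symmetric])
    also have "\<dots> = (\<Sum>j\<le>n. real (n choose j) * y (n - j))"
      by (rule sum.cong) (auto simp: binomial_symmetric[symmetric])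
    finally have rev: "(\<Sum>j\<le>n. real (n choose j) * y j) = (\<Sum>j\<le>n. real (n choose j) * y (n - j))" .
    have pair: "y j + y (n - j) = negentr (pj p n j + pj p n (n - j))" if "j \<le> n" for j
    proof -
      have "y j + y (n - j) = (psi c (pj p n j) + psi c (c\<^sup>2 / pj p n j)) / ln 2"
        unfolding y_def using pjrev[OF that] by (simp add: add_divide_distrib)
      also have "\<dots> = - (pj p n j + c\<^sup>2 / pj p n j) * ln (pj p n j + c\<^sup>2 / pj p n j) / ln 2"
        using psi_pair[OF cpos pjpos] by simp
      also have "\<dots> = negentr (pj p n j + pj p n (n - j))"
        using pjrev[OF that] pjpos[of j] pjpos[of "n - j"] by (simp add: negentr_pos)
      finally show ?thesis .
    qed
    have "2 * (\<Sum>j\<le>n. real (n choose j) * y j)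
        = (\<Sum>j\<le>n. real (n choose j) * y j) + (\<Sum>j\<le>n. real (n choose j) * y (n - j))"
      using rev by simp
    also have "\<dots> = (\<Sum>j\<le>n. real (n choose j) * (y j + y (n - j)))"
      by (simp add: sum.distrib algebra_simps)
    also have "\<dots> = (\<Sum>j\<le>n. real (n choose j) * negentr (pj p n j + pj p n (n - j)))"
      by (rule sum.cong) (auto simp: pair)
    finally show "(\<Sum>j\<le>n. real (n choose j) * y j) = Nval p n"
      unfolding Nval_def by simp
  qed
qed

lemma lp_upper:
  assumes n: "n \<ge> 1" and p: "0 \<le> p" "p \<le> 1" and x: "lp_feasible n x"
  shows "lp_obj p n x \<le> Nval p n"
proof -
  obtain y where y: "\<forall>r\<in>lp_V n. lp_f p n r \<le> (\<Sum>j\<le>n. real (r ! j) * y j)"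
    "(\<Sum>j\<le>n. real (n choose j) * y j) = Nval p n"
    using dual_exists[OF n p] by blast
  have xnn: "\<forall>r\<in>lp_V n. x r \<ge> 0" and xc: "\<forall>j\<le>n. (\<Sum>r\<in>lp_V n. real (r ! j) * x r) = real (n choose j)"
    using x unfolding lp_feasible_def by auto
  have "lp_obj p n x = (\<Sum>r\<in>lp_V n. lp_f p n r * x r)" unfolding lp_obj_def ..
  also have "\<dots> \<le> (\<Sum>r\<in>lp_V n. (\<Sum>j\<le>n. real (r ! j) * y j) * x r)"
    by (rule sum_mono) (use y(1) xnn in \<open>auto intro: mult_right_mono\<close>)
  also have "\<dots> = (\<Sum>r\<in>lp_V n. \<Sum>j\<le>n. y j * (real (r ! j) * x r))"
    by (simp add: sum_distrib_left sum_distrib_right mult_ac)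
  also have "\<dots> = (\<Sum>j\<le>n. y j * (\<Sum>r\<in>lp_V n. real (r ! j) * x r))"
    by (subst sum.swap) (simp add: sum_distrib_left)
  also have "\<dots> = (\<Sum>j\<le>n. real (n choose j) * y j)"
    by (rule sum.cong) (auto simp: xc)
  finally show ?thesis using y(2) by simp
qed



definition vec :: "nat \<Rightarrow> nat \<Rightarrow> nat list" where
  "vec n j = map (\<lambda>i. (if i = j then 1 else 0) + (if i = n - j then 1 else 0)) [0..<n+1]"

lemma vec_nth: "i \<le> n \<Longrightarrow> vec n j ! i = (if i = j then 1 else 0) + (if i = n - j then 1 else 0)"
  unfolding vec_def by (simp del: upt_Suc add: nth_append)

lemma vec_in: assumes "j \<le> n" shows "vec n j \<in> lp_V n"
proof -
  have "sum_list (vec n j) = (\<Sum>i\<in>{0..<n+1}. (if i = j then 1 else 0) + (if i = n - j then 1 else 0))"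
    unfolding vec_def by (simp del: upt_Suc add: sum_list_map_eq_sum_count2 sum_set_upt_conv_sum_list_nat[symmetric])
  also have "\<dots> = 2" using assms by (simp add: sum.distrib)
  finally show ?thesis unfolding lp_V_def vec_def by simp
qed

definition xN :: "nat \<Rightarrow> nat list \<Rightarrow> real" where
  "xN n r = (\<Sum>j\<le>n. real (n choose j) * (if r = vec n j then 1 else 0)) / 2"

lemma xN_sum:
  "(\<Sum>r\<in>lp_V n. g r * xN n r) = (\<Sum>j\<le>n. real (n choose j) * g (vec n j)) / 2"
proof -
  have e: "g r * xN n r = (\<Sum>j\<le>n. (if r = vec n j then real (n choose j) * g (vec n j) else 0)) / 2" for r
    unfolding xN_def by (simp add: sum_distrib_left) (rule sum.cong, auto)
  have "(\<Sum>r\<in>lp_V n. g r * xN n r) = (\<Sum>r\<in>lp_V n. \<Sum>j\<le>n. (if r = vec n j then real (n choose j) * g (vec n j) else 0)) / 2"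
    unfolding e by (simp add: sum_divide_distrib)
  also have "\<dots> = (\<Sum>j\<le>n. \<Sum>r\<in>lp_V n. (if r = vec n j then real (n choose j) * g (vec n j) else 0)) / 2"
    by (subst sum.swap) simp
  also have "\<dots> = (\<Sum>j\<le>n. real (n choose j) * g (vec n j)) / 2"
    by (rule arg_cong[where f="\<lambda>t. t / 2"], rule sum.cong) (auto simp: lpV_finite vec_in)
  finally show ?thesis .
qed

lemma xN_feasible: "lp_feasible n (xN n)"
  unfolding lp_feasible_def
proof (intro conjI ballI allI impI)
  fix r show "0 \<le> xN n r" unfolding xN_def by (auto intro: sum_nonneg)
next
  fix i assume i: "i \<le> n"
  have pe: "real (n choose j) * real (vec n j ! i) = (if j = i then real (n choose j) else 0) + (if j = n - i then real (n choose j) else 0)"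
    if j: "j \<le> n" for j
  proof -
    have "(i = n - j) = (j = n - i)" using i j by arith
    thus ?thesis using i by (auto simp: vec_nth)
  qed
  have "(\<Sum>r\<in>lp_V n. real (r ! i) * xN n r) = (\<Sum>j\<le>n. real (n choose j) * real (vec n j ! i)) / 2"
    by (rule xN_sum)
  also have "\<dots> = (\<Sum>j\<le>n. (if j = i then real (n choose j) else 0) + (if j = n - i then real (n choose j) else 0)) / 2"
    by (rule arg_cong[where f="\<lambda>t. t / 2"], rule sum.cong) (auto simp: pe)
  also have "\<dots> = (real (n choose i) + real (n choose (n - i))) / 2"
    using i by (simp add: sum.distrib)
  also have "\<dots> = real (n choose i)" using i by (simp add: binomial_symmetric[symmetric])
  finally show "(\<Sum>r\<in>lp_V n. real (r ! i) * xN n r) = real (n choose i)" .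
qed

lemma lp_pi_vec: "j \<le> n \<Longrightarrow> lp_pi p n (vec n j) = pj p n j + pj p n (n - j)"
proof -
  assume j: "j \<le> n"
  have "lp_pi p n (vec n j) = (\<Sum>i\<le>n. (if i = j then pj p n i else 0) + (if i = n - j then pj p n i else 0))"
    unfolding lp_pi_pj by (rule sum.cong) (auto simp: vec_nth)
  also have "\<dots> = pj p n j + pj p n (n - j)"
    using j by (simp add: sum.distrib)
  finally show ?thesis .
qed

lemma xN_obj: "lp_obj p n (xN n) = Nval p n"
proof -
  have "lp_obj p n (xN n) = (\<Sum>j\<le>n. real (n choose j) * lp_f p n (vec n j)) / 2"
    unfolding lp_obj_def by (rule xN_sum)
  also have "\<dots> = Nval p n"
    unfolding Nval_def lp_f_def by (rule arg_cong[where f="\<lambda>t. t / 2"], rule sum.cong) (auto simp: lp_pi_vec)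
  finally show ?thesis .
qed

lemma V_star_eq:
  assumes "0 \<le> p" "p \<le> 1"
  shows "V_star k p = Nval p (k + 1)"
  unfolding V_star_def
proof (rule cSup_eq_maximum)
  show "Nval p (k + 1) \<in> lp_obj p (k + 1) ` {x. lp_feasible (k + 1) x}"
    using xN_feasible xN_obj by (metis (mono_tags) image_eqI mem_Collect_eq)
  fix t assume "t \<in> lp_obj p (k + 1) ` {x. lp_feasible (k + 1) x}"
  then obtain x where "lp_feasible (k + 1) x" "t = lp_obj p (k + 1) x" by auto
  thus "t \<le> Nval p (k + 1)" using lp_upper[of "k+1" p x] assms by simp
qed



lemma finite_words: "finite (words n)"
proof -
  have "words n = {xs. set xs \<subseteq> (UNIV :: bool set) \<and> length xs = n}" by (auto simp: words_def)
  moreover have "finite {xs. set xs \<subseteq> (UNIV :: bool set) \<and> length xs = n}"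
    by (rule finite_lists_length_eq) simp
  ultimately show ?thesis by simp
qed

lemma words_Suc: "words (Suc n) = Cons True ` words n \<union> Cons False ` words n"
proof
  show "words (Suc n) \<subseteq> Cons True ` words n \<union> Cons False ` words n"
  proof
    fix xs assume "xs \<in> words (Suc n)"
    then obtain a ys where "xs = a # ys" "length ys = n" by (auto simp: words_def length_Suc_conv)
    thus "xs \<in> Cons True ` words n \<union> Cons False ` words n" by (cases a) (auto simp: words_def)
  qed
qed (auto simp: words_def)

lemma ham_nil: "hamming [] z = 0" unfolding hamming_def by simp

lemma set_Suc_split:
  "{i. i < Suc m \<and> Q i} = {i. i = 0 \<and> Q 0} \<union> Suc ` {i. i < m \<and> Q (Suc i)}"
proof
  show "{i. i < Suc m \<and> Q i} \<subseteq> {i. i = 0 \<and> Q 0} \<union> Suc ` {i. i < m \<and> Q (Suc i)}"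
  proof
    fix i assume i: "i \<in> {i. i < Suc m \<and> Q i}"
    show "i \<in> {i. i = 0 \<and> Q 0} \<union> Suc ` {i. i < m \<and> Q (Suc i)}"
    proof (cases i)
      case 0 thus ?thesis using i by simp
    next
      case (Suc j) thus ?thesis using i by auto
    qed
  qed
qed auto

lemma ham_cons: "hamming (a # x) (b # z) = (if a = b then 0 else 1) + hamming x z"
proof -
  have e: "{i. i < length (a # x) \<and> (a # x) ! i \<noteq> (b # z) ! i}
      = {i. i = 0 \<and> a \<noteq> b} \<union> Suc ` {i. i < length x \<and> x ! i \<noteq> z ! i}"
    using set_Suc_split[of "length x" "\<lambda>i. (a # x) ! i \<noteq> (b # z) ! i"] by simp
  have f: "finite {i. i < length x \<and> x ! i \<noteq> z ! i}" by simp
  have "card ({i. i = 0 \<and> a \<noteq> b} \<union> Suc ` {i. i < length x \<and> x ! i \<noteq> z ! i})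
      = card {i::nat. i = 0 \<and> a \<noteq> b} + card (Suc ` {i. i < length x \<and> x ! i \<noteq> z ! i})"
    by (rule card_Un_disjoint) (auto simp: f)
  also have "card (Suc ` {i. i < length x \<and> x ! i \<noteq> z ! i}) = hamming x z"
    unfolding hamming_def by (simp add: card_image)
  also have "card {i::nat. i = 0 \<and> a \<noteq> b} = (if a = b then 0 else 1)" by auto
  finally show ?thesis unfolding hamming_def[of "a # x"] e .
qed

lemma ham_le: "hamming x z \<le> length x"
proof -
  have "card {i. i < length x \<and> x ! i \<noteq> z ! i} \<le> card {..<length x}"
    by (rule card_mono) auto
  thus ?thesis unfolding hamming_def by simp
qed

lemma ham_not: "length x = length z \<Longrightarrow> hamming (map Not x) z = length x - hamming x z"
proof (induction x arbitrary: z)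
  case Nil thus ?case by (simp add: ham_nil)
next
  case (Cons a x)
  then obtain b z' where z: "z = b # z'" "length x = length z'" by (cases z) auto
  have "hamming x z' \<le> length x" by (rule ham_le)
  thus ?case using Cons.IH[OF z(2)] z by (simp add: ham_cons)
qed

lemma count_words:
  fixes h :: "nat \<Rightarrow> real"
  shows "length z = n \<Longrightarrow> (\<Sum>x\<in>words n. h (hamming x z)) = (\<Sum>j\<le>n. real (n choose j) * h j)"
proof (induction n arbitrary: z h)
  case 0
  hence "z = []" by simp
  moreover have "words 0 = {[]}" by (auto simp: words_def)
  ultimately show ?case by (simp add: ham_nil)
next
  case (Suc n)
  then obtain b z' where z: "z = b # z'" "length z' = n" by (cases z) auto
  have dis: "Cons True ` words n \<inter> Cons False ` words n = {}" by auto
  have "(\<Sum>x\<in>words (Suc n). h (hamming x z))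
      = (\<Sum>x\<in>Cons True ` words n. h (hamming x z)) + (\<Sum>x\<in>Cons False ` words n. h (hamming x z))"
    unfolding words_Suc by (rule sum.union_disjoint) (auto simp: finite_words)
  also have "\<dots> = (\<Sum>x\<in>words n. h (hamming (True # x) z)) + (\<Sum>x\<in>words n. h (hamming (False # x) z))"
    by (simp add: sum.reindex)
  also have "\<dots> = (\<Sum>x\<in>words n. h (hamming x z')) + (\<Sum>x\<in>words n. h (Suc (hamming x z')))"
    using z by (cases b) (simp_all add: ham_cons)
  also have "\<dots> = (\<Sum>j\<le>n. real (n choose j) * h j) + (\<Sum>j\<le>n. real (n choose j) * h (Suc j))"
    using Suc.IH[OF z(2), of h] Suc.IH[OF z(2), of "\<lambda>j. h (Suc j)"] by simp
  also have "\<dots> = (\<Sum>j\<le>Suc n. real (Suc n choose j) * h j)"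
  proof -
    have a: "(\<Sum>j\<le>Suc n. real (Suc n choose j) * h j)
        = h 0 + (\<Sum>j\<le>n. real (n choose j) * h (Suc j)) + (\<Sum>j\<le>n. real (n choose Suc j) * h (Suc j))"
      by (simp add: sum.atMost_Suc_shift sum.distrib algebra_simps del: sum.atMost_Suc)
    have b: "(\<Sum>j\<le>n. real (n choose j) * h j) = h 0 + (\<Sum>j\<le>n. real (n choose Suc j) * h (Suc j))"
    proof -
      have "(\<Sum>j\<le>Suc n. real (n choose j) * h j) = (\<Sum>j\<le>n. real (n choose j) * h j)"
        by simp
      moreover have "(\<Sum>j\<le>Suc n. real (n choose j) * h j) = h 0 + (\<Sum>j\<le>n. real (n choose Suc j) * h (Suc j))"
        by (simp add: sum.atMost_Suc_shift del: sum.atMost_Suc)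
      ultimately show ?thesis by (simp add: binomial_eq_0)
    qed
    show ?thesis using a b by simp
  qed
  finally show ?case .
qed

lemma card_words: "real (card (words n)) = 2 ^ n"
proof -
  have "(\<Sum>x\<in>words n. (\<lambda>_. 1::real) (hamming x (replicate n False))) = (\<Sum>j\<le>n. real (n choose j) * 1)"
    using count_words[of "replicate n False" n "\<lambda>_. 1"] by simp
  also have "\<dots> = real (\<Sum>j\<le>n. n choose j)" by simp
  also have "\<dots> = 2 ^ n" by (simp add: choose_row_sum)
  finally show ?thesis by simp
qed

lemma not_not_map: "map Not (map Not x) = x" by (induct x) auto

lemma per_z:
  assumes n: "n \<ge> 1" and z: "z \<in> words n"
  shows "(\<Sum>B\<in>ni_bins n. negentr (bin_prob p n B z)) = Nval p n"
proof -
  define \<phi> where "\<phi> x = {x, map Not x}" for x :: "bool list"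
  define G where "G B = negentr (bin_prob p n B z)" for B
  have bins: "ni_bins n = \<phi> ` words n" unfolding ni_bins_def \<phi>_def by auto
  have neq: "x \<noteq> map Not x" if "x \<in> words n" for x
    using that n by (cases x) (auto simp: words_def)
  have fib: "{y \<in> words n. \<phi> y = \<phi> x} = {x, map Not x}" if "x \<in> words n" for x
  proof
    show "{y \<in> words n. \<phi> y = \<phi> x} \<subseteq> {x, map Not x}"
    proof
      fix y assume "y \<in> {y \<in> words n. \<phi> y = \<phi> x}"
      hence "y \<in> \<phi> x" unfolding \<phi>_def by auto
      thus "y \<in> {x, map Not x}" unfolding \<phi>_def .
    qed
    show "{x, map Not x} \<subseteq> {y \<in> words n. \<phi> y = \<phi> x}"
      using that by (auto simp: \<phi>_def words_def comp_def)
  qed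
  have "(\<Sum>x\<in>words n. G (\<phi> x)) = (\<Sum>B\<in>\<phi> ` words n. \<Sum>x\<in>{y \<in> words n. \<phi> y = B}. G (\<phi> x))"
    by (rule sum.image_gen[OF finite_words])
  also have "\<dots> = (\<Sum>B\<in>\<phi> ` words n. 2 * G B)"
  proof (rule sum.cong)
    fix B assume "B \<in> \<phi> ` words n"
    then obtain x where x: "x \<in> words n" "B = \<phi> x" by auto
    have "\<phi> (map Not x) = \<phi> x" by (auto simp: \<phi>_def comp_def)
    thus "(\<Sum>y\<in>{y \<in> words n. \<phi> y = B}. G (\<phi> y)) = 2 * G B"
      using x fib[OF x(1)] neq[OF x(1)] by simp
  qed simp
  finally have s1: "(\<Sum>x\<in>words n. G (\<phi> x)) = 2 * (\<Sum>B\<in>ni_bins n. G B)"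
    unfolding bins by (simp add: sum_distrib_left)
  have gphi: "G (\<phi> x) = negentr (pj p n (hamming x z) + pj p n (n - hamming x z))" if "x \<in> words n" for x
  proof -
    have lx: "length x = n" "length z = n" using that z by (auto simp: words_def)
    have "bin_prob p n (\<phi> x) z = bsc_post p n x z + bsc_post p n (map Not x) z"
      unfolding bin_prob_def \<phi>_def using neq[OF that] by simp
    also have "\<dots> = pj p n (hamming x z) + pj p n (n - hamming x z)"
      unfolding bsc_post_def pj_def using ham_not[of x z] lx by simp
    finally show ?thesis unfolding G_def by simp
  qed
  have "(\<Sum>x\<in>words n. G (\<phi> x)) = (\<Sum>x\<in>words n. (\<lambda>d. negentr (pj p n d + pj p n (n - d))) (hamming x z))"
    by (rule sum.cong) (auto simp: gphi)
  also have "\<dots> = (\<Sum>j\<le>n. real (n choose j) * negentr (pj p n j + pj p n (n - j)))"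
    by (rule count_words) (use z in \<open>simp add: words_def\<close>)
  finally have "(\<Sum>x\<in>words n. G (\<phi> x)) = 2 * Nval p n" unfolding Nval_def by simp
  with s1 show ?thesis unfolding G_def by simp
qed

theorem lemma2:
  fixes k :: nat and p :: real
  assumes "k \<ge> 1" and "0 \<le> p" and "p \<le> 1"
  shows "equivocation p (k + 1) (ni_bins (k + 1)) = V_star k p"
proof -
  have "equivocation p (k + 1) (ni_bins (k + 1)) = (1 / 2 ^ (k + 1)) * (\<Sum>z\<in>words (k + 1). Nval p (k + 1))"
    unfolding equivocation_def by (simp add: per_z)
  also have "\<dots> = Nval p (k + 1)" using card_words[of "k + 1"] by simp
  also have "\<dots> = V_star k p" using V_star_eq[OF assms(2,3)] by simp
  finally show ?thesis .
qed

end
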